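(* Let $(\Omega,\mathcal F,P)$ be a probability space with a filtration $\mathcal G_1\subset\mathcal G_2\subset\cdots$ of sub-$\sigma$-algebras, and let $\eta_j$, $j\ge1$, be $d$-dimensional random vectors with $\eta_j$ being $\mathcal G_j$-measurable. Suppose that for some integer $M\ge1$, $$A_{2M}=\sup_{i\ge1}\sum_{j\ge i}\|E(\eta_j\,|\,\mathcal G_i)\|_{2M}<\infty,$$ where $\|\eta\|_p=(E|\eta|^p)^{1/p}$ and $|\cdot|$ is the Euclidean norm. Then for every integer $n\ge1$, $$E\Big|\sum_{j=1}^n\eta_j\Big|^{2M}\le 3(2M)!\,d^MA_{2M}^{2M}n^M.$$ *)

theory Defs
  imports "HOL-Probability.Probability"
begin

definition Lnorm :: "'a measure \<Rightarrow> real \<Rightarrow> ('a \<Rightarrow> 'b::real_normed_vector) \<Rightarrow> ennreal" where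
  "Lnorm M p f =
     (let I = (\<integral>\<^sup>+ x. ennreal (norm (f x) powr p) \<partial>M)
      in if I = \<infinity> then \<infinity> else ennreal (enn2real I powr (1 / p)))"

definition vcond_exp :: "'a measure \<Rightarrow> 'a measure \<Rightarrow> ('a \<Rightarrow> real ^ 'd) \<Rightarrow> ('a \<Rightarrow> real ^ 'd)" where
  "vcond_exp M F f = (\<lambda>x. \<chi> k. real_cond_exp M F (\<lambda>y. f y $ k) x)"

definition A_const :: "'a measure \<Rightarrow> (nat \<Rightarrow> 'a measure) \<Rightarrow> (nat \<Rightarrow> 'a \<Rightarrow> real ^ 'd) \<Rightarrow> nat \<Rightarrow> ennreal" where
  "A_const M G \<eta> m =
     (SUP i\<in>{1..}. \<Sum>k. Lnorm M (real (2 * m)) (vcond_exp M (G i) (\<eta> (i + k))))"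

end

theory Submission
  imports Defs
begin


definition lp :: "'a measure \<Rightarrow> nat \<Rightarrow> ('a \<Rightarrow> real) \<Rightarrow> bool" where
  "lp M p f \<longleftrightarrow> f \<in> borel_measurable M \<and> integrable M (\<lambda>x. \<bar>f x\<bar> ^ p)"

definition pn :: "'a measure \<Rightarrow> nat \<Rightarrow> ('a \<Rightarrow> real) \<Rightarrow> real" where
  "pn M p f = (\<integral>x. \<bar>f x\<bar> ^ p \<partial>M) powr (1 / real p)"

lemma pow_powr_inv: "0 \<le> (z::real) \<Longrightarrow> 0 < p \<Longrightarrow> (z ^ p) powr (1 / real p) = z"
proof (cases "z = 0")
  case False
  assume "0 \<le> z" "0 < p"
  then have "z > 0" using False by simp
  then show ?thesis using \<open>0 < p\<close>
    by (simp add: powr_realpow[symmetric] powr_powr)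
qed simp

lemma powr_inv_pow: "0 \<le> (z::real) \<Longrightarrow> 0 < p \<Longrightarrow> (z powr (1 / real p)) ^ p = z"
proof (cases "z = 0")
  case False
  assume "0 \<le> z" "0 < p"
  then have "z > 0" using False by simp
  then show ?thesis using \<open>0 < p\<close>
    by (simp add: powr_realpow[symmetric] powr_powr)
qed simp

lemma amgm_pow:
  fixes y :: "nat \<Rightarrow> real"
  assumes "0 < p" "\<And>k. k < p \<Longrightarrow> 0 \<le> y k"
  shows "(\<Prod>k<p. y k) \<le> (\<Sum>k<p. y k ^ p) / real p"
proof -
  have "(\<Prod>k<p. y k ^ p) powr (1 / card {..<p}) \<le> (\<Sum>k\<in>{..<p}. y k ^ p / card {..<p})"
    by (rule arith_geom_mean) (use assms in auto)
  moreover have "(\<Prod>k<p. y k ^ p) = (\<Prod>k<p. y k) ^ p" by (simp add: prod_power_distrib)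
  moreover have "(\<Prod>k<p. y k) \<ge> 0" using assms by (auto intro: prod_nonneg)
  ultimately show ?thesis using assms(1) by (simp add: pow_powr_inv sum_divide_distrib)
qed

lemma pn_nonneg: "pn M p f \<ge> 0" unfolding pn_def by simp

lemma pn_pow: assumes "0 < p" shows "pn M p f ^ p = (\<integral>x. \<bar>f x\<bar> ^ p \<partial>M)"
  unfolding pn_def by (rule powr_inv_pow) (auto simp: assms)

lemma holder_fam:
  fixes f :: "nat \<Rightarrow> 'a \<Rightarrow> real"
  assumes p: "0 < p" and lp: "\<And>k. k < p \<Longrightarrow> lp M p (f k)"
    and nn: "\<And>k x. k < p \<Longrightarrow> 0 \<le> f k x"
  shows "integrable M (\<lambda>x. \<Prod>k<p. f k x)"
    "(\<integral>x. (\<Prod>k<p. f k x) \<partial>M) \<le> (\<Prod>k<p. pn M p (f k))"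
proof -
  have meas[measurable]: "\<And>k. k < p \<Longrightarrow> f k \<in> borel_measurable M" using lp unfolding lp_def by auto
  have intp: "\<And>k. k < p \<Longrightarrow> integrable M (\<lambda>x. f k x ^ p)" using lp nn unfolding lp_def by auto
  have pm: "(\<lambda>x. \<Prod>k<p. f k x) \<in> borel_measurable M"
    by (rule borel_measurable_prod) (auto intro: meas)
  have bnd: "(\<Prod>k<p. f k x) \<le> (\<Sum>k<p. f k x ^ p) / real p" for x
    by (rule amgm_pow) (use p nn in auto)
  show int: "integrable M (\<lambda>x. \<Prod>k<p. f k x)"
  proof (rule Bochner_Integration.integrable_bound[where f="\<lambda>x. (\<Sum>k<p. f k x ^ p) / real p"])
    show "integrable M (\<lambda>x. (\<Sum>k<p. f k x ^ p) / real p)"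
      using intp by (intro integrable_divide integrable_sum) auto
    show "AE x in M. norm (\<Prod>k<p. f k x) \<le> norm ((\<Sum>k<p. f k x ^ p) / real p)"
    proof (intro AE_I2)
      fix x
      have "0 \<le> (\<Prod>k<p. f k x)" by (auto intro: prod_nonneg nn)
      moreover have "0 \<le> (\<Sum>k<p. f k x ^ p)" by (rule sum_nonneg) (simp add: nn)
      ultimately show "norm (\<Prod>k<p. f k x) \<le> norm ((\<Sum>k<p. f k x ^ p) / real p)"
        using bnd[of x] by simp
    qed
  qed (rule pm)
  show "(\<integral>x. (\<Prod>k<p. f k x) \<partial>M) \<le> (\<Prod>k<p. pn M p (f k))"
  proof (cases "\<exists>k<p. pn M p (f k) = 0")
    case True
    then obtain j where j: "j < p" "pn M p (f j) = 0" by auto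
    then have "(\<integral>x. \<bar>f j x\<bar> ^ p \<partial>M) = 0" using pn_pow[OF p, of M "f j"] p by (simp add: zero_power)
    then have "AE x in M. \<bar>f j x\<bar> ^ p = 0"
      using integral_nonneg_eq_0_iff_AE[of M "\<lambda>x. \<bar>f j x\<bar> ^ p"] lp[OF j(1)] unfolding lp_def by auto
    then have "AE x in M. (\<Prod>k<p. f k x) = 0"
      by eventually_elim (use j in \<open>auto simp: prod_zero_iff\<close>)
    then have "(\<integral>x. (\<Prod>k<p. f k x) \<partial>M) = 0" by (rule integral_eq_zero_AE)
    then show ?thesis by (simp add: prod_nonneg pn_nonneg)
  next
    case False
    define N where "N k = pn M p (f k)" for k
    have Npos: "\<And>k. k < p \<Longrightarrow> N k > 0" using False pn_nonneg unfolding N_def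
      by (metis less_eq_real_def)
    have Nprod: "0 \<le> (\<Prod>k<p. N k)" by (rule prod_nonneg) (use Npos in \<open>auto intro: less_imp_le\<close>)
    have "(\<Prod>k<p. f k x) = (\<Prod>k<p. N k) * (\<Prod>k<p. f k x / N k)" for x
      using Npos by (auto simp add: prod.distrib[symmetric] intro!: prod.cong) (metis less_irrefl)
    also have "\<dots> x \<le> (\<Prod>k<p. N k) * ((\<Sum>k<p. (f k x / N k) ^ p) / real p)" for x
      by (intro mult_left_mono amgm_pow) (use p nn Npos Nprod in \<open>auto intro: less_imp_le divide_nonneg_pos\<close>)
    finally have pw: "\<And>x. (\<Prod>k<p. f k x) \<le> (\<Prod>k<p. N k) * ((\<Sum>k<p. (f k x / N k) ^ p) / real p)" .
    have int2: "integrable M (\<lambda>x. (\<Prod>k<p. N k) * ((\<Sum>k<p. (f k x / N k) ^ p) / real p))"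
      using intp by (intro integrable_mult_right integrable_divide integrable_sum) (auto simp: power_divide)
    have "(\<integral>x. (\<Prod>k<p. f k x) \<partial>M) \<le> (\<integral>x. (\<Prod>k<p. N k) * ((\<Sum>k<p. (f k x / N k) ^ p) / real p) \<partial>M)"
      by (rule integral_mono[OF int int2 pw])
    also have "\<dots> = (\<Prod>k<p. N k) * ((\<Sum>k<p. (\<integral>x. f k x ^ p \<partial>M) / N k ^ p) / real p)"
      using intp by (simp add: power_divide Bochner_Integration.integral_sum)
    also have "(\<Sum>k<p. (\<integral>x. f k x ^ p \<partial>M) / N k ^ p) = (\<Sum>k<p. 1)"
    proof (rule sum.cong)
      fix k assume "k \<in> {..<p}"
      then have "N k ^ p = (\<integral>x. f k x ^ p \<partial>M)" using pn_pow[OF p, of M "f k"] nn unfolding N_def by simp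
      moreover have "N k ^ p > 0" using Npos \<open>k \<in> {..<p}\<close> by simp
      ultimately show "(\<integral>x. f k x ^ p \<partial>M) / N k ^ p = 1" by simp
    qed simp
    finally show ?thesis using p unfolding N_def by simp
  qed
qed



lemma prod_lessThan_add: fixes n m :: nat shows "(\<Prod>k<n+m. f k) = (\<Prod>k<n. f k) * (\<Prod>k<m. f (n+k))"
  by (induct m) (simp_all add: mult.assoc)

lemma prod_four:
  fixes A B C D :: "'b::comm_monoid_mult"
  shows "(\<Prod>k<i+j+l+r. if k<i then A else if k<i+j then B else if k<i+j+l then C else D)
     = A^i * B^j * C^l * D^r"
proof -
  let ?f = "\<lambda>k. if k<i then A else if k<i+j then B else if k<i+j+l then C else D"
  have 1: "(\<Prod>k<r. ?f (i+j+l+k)) = D^r" by simp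
  have 2: "(\<Prod>k<l. ?f (i+j+k)) = C^l" by simp
  have 3: "(\<Prod>k<j. ?f (i+k)) = B^j" by simp
  have 4: "(\<Prod>k<i. ?f k) = A^i" by simp
  show ?thesis
    unfolding prod_lessThan_add[of _ "i+j+l" r] prod_lessThan_add[of _ "i+j" l] prod_lessThan_add[of _ i j]
    using 1 2 3 4 by (simp add: add.assoc)
qed

lemma lp_abs: "lp M p f \<Longrightarrow> lp M p (\<lambda>x. \<bar>f x\<bar>)" unfolding lp_def by auto
lemma pn_abs: "pn M p (\<lambda>x. \<bar>f x\<bar>) = pn M p f" unfolding pn_def by simp

lemma holder4:
  fixes u v a b :: "'a \<Rightarrow> real"
  assumes p: "p = i+j+l+r" "0 < p" and lp: "lp M p u" "lp M p v" "lp M p a" "lp M p b"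
  shows "integrable M (\<lambda>x. \<bar>u x\<bar>^i * \<bar>v x\<bar>^j * \<bar>a x\<bar>^l * \<bar>b x\<bar>^r)"
    "(\<integral>x. \<bar>u x\<bar>^i * \<bar>v x\<bar>^j * \<bar>a x\<bar>^l * \<bar>b x\<bar>^r \<partial>M)
       \<le> pn M p u ^ i * pn M p v ^ j * pn M p a ^ l * pn M p b ^ r"
proof -
  define f where "f = (\<lambda>k x. if k<i then \<bar>u x\<bar> else if k<i+j then \<bar>v x\<bar> else if k<i+j+l then \<bar>a x\<bar> else \<bar>b x\<bar>)"
  have lpf: "lp M p (f k)" if "k < p" for k
    using lp lp_abs[OF lp(1)] lp_abs[OF lp(2)] lp_abs[OF lp(3)] lp_abs[OF lp(4)]
    unfolding f_def by (cases "k<i"; cases "k<i+j"; cases "k<i+j+l") auto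
  have nnf: "\<And>k x. k < p \<Longrightarrow> 0 \<le> f k x" unfolding f_def by auto
  have e1: "(\<Prod>k<p. f k x) = \<bar>u x\<bar>^i * \<bar>v x\<bar>^j * \<bar>a x\<bar>^l * \<bar>b x\<bar>^r" for x
    unfolding f_def p(1) by (rule prod_four)
  have e2: "(\<Prod>k<p. pn M p (f k)) = pn M p u ^ i * pn M p v ^ j * pn M p a ^ l * pn M p b ^ r"
  proof -
    have "(\<Prod>k<p. pn M p (f k)) = (\<Prod>k<i+j+l+r. if k<i then pn M p u else if k<i+j then pn M p v else if k<i+j+l then pn M p a else pn M p b)"
      unfolding p(1) by (rule prod.cong) (auto simp: f_def pn_abs)
    then show ?thesis by (simp add: prod_four)
  qed
  show "integrable M (\<lambda>x. \<bar>u x\<bar>^i * \<bar>v x\<bar>^j * \<bar>a x\<bar>^l * \<bar>b x\<bar>^r)"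
    using holder_fam(1)[of p M f, OF p(2) lpf nnf] e1 by simp
  show "(\<integral>x. \<bar>u x\<bar>^i * \<bar>v x\<bar>^j * \<bar>a x\<bar>^l * \<bar>b x\<bar>^r \<partial>M)
       \<le> pn M p u ^ i * pn M p v ^ j * pn M p a ^ l * pn M p b ^ r"
    using holder_fam(2)[of p M f, OF p(2) lpf nnf] e1 e2 by simp
qed

lemma abs_add_pow_le: "\<bar>(a::real) + b\<bar> ^ p \<le> 2 ^ p * (\<bar>a\<bar> ^ p + \<bar>b\<bar> ^ p)"
proof -
  have "\<bar>a + b\<bar> \<le> 2 * max \<bar>a\<bar> \<bar>b\<bar>" by auto
  then have "\<bar>a + b\<bar> ^ p \<le> (2 * max \<bar>a\<bar> \<bar>b\<bar>) ^ p" by (rule power_mono) simp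
  also have "\<dots> = 2 ^ p * max \<bar>a\<bar> \<bar>b\<bar> ^ p" by (simp add: power_mult_distrib)
  also have "max \<bar>a\<bar> \<bar>b\<bar> ^ p \<le> \<bar>a\<bar> ^ p + \<bar>b\<bar> ^ p" by (simp add: max_def)
  finally show ?thesis by simp
qed

lemma lp_add: assumes "lp M p f" "lp M p g" shows "lp M p (\<lambda>x. f x + g x)"
  unfolding lp_def
proof
  show "(\<lambda>x. f x + g x) \<in> borel_measurable M" using assms unfolding lp_def by auto
  show "integrable M (\<lambda>x. \<bar>f x + g x\<bar> ^ p)"
  proof (rule Bochner_Integration.integrable_bound[where f="\<lambda>x. 2 ^ p * (\<bar>f x\<bar> ^ p + \<bar>g x\<bar> ^ p)"])
    show "integrable M (\<lambda>x. 2 ^ p * (\<bar>f x\<bar> ^ p + \<bar>g x\<bar> ^ p))" using assms unfolding lp_def by auto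
    show "(\<lambda>x. \<bar>f x + g x\<bar> ^ p) \<in> borel_measurable M" using assms unfolding lp_def by auto
    show "AE x in M. norm (\<bar>f x + g x\<bar> ^ p) \<le> norm (2 ^ p * (\<bar>f x\<bar> ^ p + \<bar>g x\<bar> ^ p))"
      by (intro AE_I2) (simp add: abs_add_pow_le)
  qed
qed

lemma lp_zero: "lp M p (\<lambda>x. 0)" if "0 < p" unfolding lp_def using that by (simp add: zero_power)

lemma lp_sum: assumes "0 < p" "\<And>i. i \<in> I \<Longrightarrow> lp M p (f i)" shows "lp M p (\<lambda>x. \<Sum>i\<in>I. f i x)"
  using assms(2)
proof (induct I rule: infinite_finite_induct)
  case (infinite A) then show ?case using lp_zero[OF assms(1)] by simp
next
  case empty then show ?case using lp_zero[OF assms(1)] by simp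
next
  case (insert i F) then show ?case by (simp add: lp_add)
qed

lemma lp_cmult: assumes "lp M p f" shows "lp M p (\<lambda>x. c * f x)"
proof -
  have [measurable]: "f \<in> borel_measurable M" using assms unfolding lp_def by auto
  show ?thesis using assms unfolding lp_def by (simp add: abs_mult power_mult_distrib)
qed

lemma lp_neg: "lp M p f \<Longrightarrow> lp M p (\<lambda>x. - f x)"
  unfolding lp_def by simp

lemma lp_const: "finite_measure M \<Longrightarrow> lp M p (\<lambda>x. c)"
  unfolding lp_def by (simp add: finite_measure.integrable_const)

lemma lp_integrable: assumes "finite_measure M" "1 \<le> p" "lp M p f" shows "integrable M f"
proof (rule Bochner_Integration.integrable_bound[where f="\<lambda>x. 1 + \<bar>f x\<bar> ^ p"])
  show "integrable M (\<lambda>x. 1 + \<bar>f x\<bar> ^ p)" using assms unfolding lp_def by (simp add: finite_measure.integrable_const)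
  show "f \<in> borel_measurable M" using assms unfolding lp_def by auto
  show "AE x in M. norm (f x) \<le> norm (1 + \<bar>f x\<bar> ^ p)"
  proof (intro AE_I2)
    fix x
    have "\<bar>f x\<bar> \<le> 1 + \<bar>f x\<bar> ^ p"
    proof (cases "\<bar>f x\<bar> \<le> 1")
      case False
      then have "\<bar>f x\<bar> ^ 1 \<le> \<bar>f x\<bar> ^ p" by (intro power_increasing) (use assms(2) in auto)
      then show ?thesis by simp
    qed (simp add: add_increasing2)
    then show "norm (f x) \<le> norm (1 + \<bar>f x\<bar> ^ p)" by simp
  qed
qed

lemma pn_cong_AE: assumes "AE x in M. f x = g x" and [measurable]: "f \<in> borel_measurable M" "g \<in> borel_measurable M" shows "pn M p f = pn M p g"
proof -
  have "(\<integral>x. \<bar>f x\<bar> ^ p \<partial>M) = (\<integral>x. \<bar>g x\<bar> ^ p \<partial>M)"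
    by (rule integral_cong_AE) (use assms in auto)
  then show ?thesis unfolding pn_def by simp
qed

lemma minkowski: assumes "1 \<le> p" "lp M p f" "lp M p g"
  shows "pn M p (\<lambda>x. f x + g x) \<le> pn M p f + pn M p g"
proof -
  have p: "0 < p" using assms by simp
  define h where "h x = \<bar>f x + g x\<bar>" for x
  have lph: "lp M p h" unfolding h_def by (intro lp_abs lp_add assms)
  have pnh: "pn M p h = pn M p (\<lambda>x. f x + g x)" unfolding h_def by (rule pn_abs)
  have H1: "(\<integral>x. \<bar>f x\<bar>^1 * \<bar>h x\<bar>^0 * \<bar>h x\<bar>^(p-1) * \<bar>h x\<bar>^0 \<partial>M) \<le> pn M p f ^ 1 * pn M p h ^ 0 * pn M p h ^ (p-1) * pn M p h ^ 0"
   and I1: "integrable M (\<lambda>x. \<bar>f x\<bar>^1 * \<bar>h x\<bar>^0 * \<bar>h x\<bar>^(p-1) * \<bar>h x\<bar>^0)"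
    using holder4[of p 1 0 "p-1" 0 M f h h h] assms lph p by auto
  have H2: "(\<integral>x. \<bar>g x\<bar>^1 * \<bar>h x\<bar>^0 * \<bar>h x\<bar>^(p-1) * \<bar>h x\<bar>^0 \<partial>M) \<le> pn M p g ^ 1 * pn M p h ^ 0 * pn M p h ^ (p-1) * pn M p h ^ 0"
   and I2: "integrable M (\<lambda>x. \<bar>g x\<bar>^1 * \<bar>h x\<bar>^0 * \<bar>h x\<bar>^(p-1) * \<bar>h x\<bar>^0)"
    using holder4[of p 1 0 "p-1" 0 M g h h h] assms lph p by auto
  have pw: "\<bar>h x\<bar> ^ p \<le> \<bar>f x\<bar> * \<bar>h x\<bar> ^ (p-1) + \<bar>g x\<bar> * \<bar>h x\<bar> ^ (p-1)" for x
  proof -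
    have "\<bar>h x\<bar> ^ p = \<bar>h x\<bar> * \<bar>h x\<bar> ^ (p-1)" using p by (simp add: power_eq_if)
    also have "\<dots> \<le> (\<bar>f x\<bar> + \<bar>g x\<bar>) * \<bar>h x\<bar> ^ (p-1)"
      by (intro mult_right_mono) (auto simp: h_def)
    finally show ?thesis by (simp add: distrib_right)
  qed
  have "pn M p h ^ p = (\<integral>x. \<bar>h x\<bar> ^ p \<partial>M)" by (rule pn_pow[OF p])
  also have "\<dots> \<le> (\<integral>x. \<bar>f x\<bar> * \<bar>h x\<bar> ^ (p-1) + \<bar>g x\<bar> * \<bar>h x\<bar> ^ (p-1) \<partial>M)"
    by (rule integral_mono) (use lph I1 I2 pw in \<open>auto simp: lp_def\<close>)
  also have "\<dots> = (\<integral>x. \<bar>f x\<bar> * \<bar>h x\<bar> ^ (p-1) \<partial>M) + (\<integral>x. \<bar>g x\<bar> * \<bar>h x\<bar> ^ (p-1) \<partial>M)"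
    using I1 I2 by simp
  also have "\<dots> \<le> (pn M p f + pn M p g) * pn M p h ^ (p-1)"
    using H1 H2 by (simp add: distrib_right)
  finally have *: "pn M p h ^ p \<le> (pn M p f + pn M p g) * pn M p h ^ (p-1)" .
  show ?thesis
  proof (cases "pn M p h = 0")
    case True then show ?thesis using pnh pn_nonneg[of M p f] pn_nonneg[of M p g] by simp
  next
    case False
    then have pos: "pn M p h ^ (p-1) > 0" using pn_nonneg[of M p h] by simp
    have "pn M p h * pn M p h ^ (p-1) \<le> (pn M p f + pn M p g) * pn M p h ^ (p-1)"
      using * p by (simp add: power_eq_if)
    then have "pn M p h \<le> pn M p f + pn M p g" using pos by simp
    then show ?thesis using pnh by simp
  qed
qed

lemma minkowski_sum: assumes "1 \<le> p" "\<And>i. i \<in> I \<Longrightarrow> lp M p (f i)"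
  shows "pn M p (\<lambda>x. \<Sum>i\<in>I. f i x) \<le> (\<Sum>i\<in>I. pn M p (f i))"
  using assms(2)
proof (induct I rule: infinite_finite_induct)
  case (infinite A) then show ?case using assms(1) by (simp add: pn_def)
next
  case empty then show ?case using assms(1) by (simp add: pn_def)
next
  case (insert i F)
  have "pn M p (\<lambda>x. \<Sum>i\<in>insert i F. f i x) = pn M p (\<lambda>x. f i x + (\<Sum>i\<in>F. f i x))"
    using insert by simp
  also have "\<dots> \<le> pn M p (f i) + pn M p (\<lambda>x. \<Sum>i\<in>F. f i x)"
    by (rule minkowski) (use assms(1) insert in \<open>auto intro!: lp_sum\<close>)
  also have "\<dots> \<le> pn M p (f i) + (\<Sum>i\<in>F. pn M p (f i))" using insert by simp
  finally show ?case using insert by simp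
qed



lemma bern_aux: "(real n + 1) ^ (k+1) \<ge> real n ^ (k+1) + real (k+1) * real n ^ k"
proof (induct k)
  case 0 then show ?case by simp
next
  case (Suc k)
  have "(real n + 1) ^ (Suc k + 1) = (real n + 1) * (real n + 1) ^ (k+1)" by simp
  also have "\<dots> \<ge> (real n + 1) * (real n ^ (k+1) + real (k+1) * real n ^ k)"
    by (rule mult_left_mono[OF Suc]) simp
  finally have *: "(real n + 1) ^ (Suc k + 1) \<ge> (real n + 1) * (real n ^ (k+1) + real (k+1) * real n ^ k)" .
  have "(real n + 1) * (real n ^ (k+1) + real (k+1) * real n ^ k)
      = real n ^ (Suc k + 1) + real (Suc k + 1) * real n ^ Suc k + real (k+1) * real n ^ k"
    by (simp add: algebra_simps)
  moreover have "0 \<le> real (k+1) * real n ^ k" by simp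
  ultimately show ?case using * by linarith
qed

lemma sum_pow_le: assumes "1 \<le> m" shows "(\<Sum>j<n. real j ^ (m-1)) \<le> real n ^ m / real m"
proof (induct n)
  case 0 then show ?case using assms by simp
next
  case (Suc n)
  have b: "(real n + 1) ^ ((m-1)+1) \<ge> real n ^ ((m-1)+1) + real ((m-1)+1) * real n ^ (m-1)"
    by (rule bern_aux)
  have mm: "(m-1)+1 = m" using assms by simp
  have "(\<Sum>j<Suc n. real j ^ (m-1)) \<le> real n ^ m / real m + real n ^ (m-1)" using Suc by simp
  also have "\<dots> = (real n ^ m + real m * real n ^ (m-1)) / real m" using assms by (simp add: field_simps)
  also have "\<dots> \<le> (real n + 1) ^ m / real m" using b unfolding mm by (intro divide_right_mono) auto
  finally show ?case by (simp add: add.commute)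
qed

lemma seq_bound:
  fixes s :: "nat \<Rightarrow> real" and A :: real and m :: nat
  assumes m: "1 \<le> m" and s0: "s 0 = 0" and nn: "\<And>k. 0 \<le> s k" and lin: "\<And>k. s k \<le> real k * A"
    and key: "\<And>n. s n ^ (2*m) \<le> real m * (2 * real m - 1) * A\<^sup>2 * (\<Sum>j=1..n. max (s j) (s (j-1)) ^ (2*m-2))"
  shows "s n ^ 2 \<le> 3 * real m * real n * A\<^sup>2"
proof (induct n rule: less_induct)
  case (less n)
  define c where "c = 3 * real m"
  have cpos: "c > 0" using m unfolding c_def by simp
  show ?case
  proof (cases "real n \<le> c")
    case True
    have "s n ^ 2 \<le> (real n * A) ^ 2" using lin[of n] nn[of n] by (intro power_mono) auto
    also have "\<dots> = real n * (real n * A\<^sup>2)" by (simp add: power2_eq_square)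
    also have "\<dots> \<le> c * (real n * A\<^sup>2)" using True by (intro mult_right_mono) auto
    finally show ?thesis unfolding c_def by (simp add: mult.assoc)
  next
    case False
    then have ngt: "real n > c" by simp
    show ?thesis
    proof (rule ccontr)
      assume "\<not> ?thesis"
      then have big: "s n ^ 2 > c * real n * A\<^sup>2" unfolding c_def by simp
      have n1: "n \<ge> 1" using ngt cpos by (cases n) auto
      have IH: "\<And>j. j < n \<Longrightarrow> s j ^ 2 \<le> c * real j * A\<^sup>2" using less unfolding c_def by simp
      have sn_pos: "s n > 0"
      proof -
        have "c * real n * A\<^sup>2 \<ge> 0" using cpos by simp
        then have "s n ^ 2 > 0" using big by linarith
        then show ?thesis using nn[of n] by (simp add: less_le)
      qed
      have "s (n-1) ^ 2 \<le> c * real (n-1) * A\<^sup>2" using IH[of "n-1"] n1 by simp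
      also have "\<dots> \<le> c * real n * A\<^sup>2" using cpos by (intro mult_right_mono mult_left_mono) auto
      finally have "s (n-1) ^ 2 < s n ^ 2" using big by simp
      then have "s (n-1) < s n" using nn[of "n-1"] nn[of n] by (simp add: power_less_imp_less_base)
      then have maxn: "max (s n) (s (n-1)) = s n" by simp
      have bj: "max (s j) (s (j-1)) ^ (2*m-2) \<le> (c * A\<^sup>2) ^ (m-1) * real j ^ (m-1)" if j: "j \<in> {1..n-1}" for j
      proof -
        have jn: "j < n" "j - 1 < n" using j n1 by auto
        have "s j ^ 2 \<le> c * real j * A\<^sup>2" using IH[OF jn(1)] .
        moreover have "s (j-1) ^ 2 \<le> c * real j * A\<^sup>2"
        proof -
          have "s (j-1) ^ 2 \<le> c * real (j-1) * A\<^sup>2" using IH[OF jn(2)] .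
          also have "\<dots> \<le> c * real j * A\<^sup>2" using cpos by (intro mult_right_mono mult_left_mono) auto
          finally show ?thesis .
        qed
        ultimately have "max (s j) (s (j-1)) ^ 2 \<le> c * real j * A\<^sup>2" by (simp add: max_def)
        then have "(max (s j) (s (j-1)) ^ 2) ^ (m-1) \<le> (c * real j * A\<^sup>2) ^ (m-1)"
          by (intro power_mono) (auto simp: max_def nn)
        moreover have "(max (s j) (s (j-1)) ^ 2) ^ (m-1) = max (s j) (s (j-1)) ^ (2*m-2)"
          by (simp add: power_mult[symmetric] right_diff_distrib' mult.commute)
        ultimately show ?thesis by (simp add: power_mult_distrib mult_ac)
      qed
      have split: "{1..n} = insert n {1..n-1}" using n1 by auto
      have sumeq: "(\<Sum>j=1..n. max (s j) (s (j-1)) ^ (2*m-2)) = s n ^ (2*m-2) + (\<Sum>j=1..n-1. max (s j) (s (j-1)) ^ (2*m-2))"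
        unfolding split using maxn n1 by simp
      have "(\<Sum>j=1..n-1. max (s j) (s (j-1)) ^ (2*m-2)) \<le> (\<Sum>j=1..n-1. (c * A\<^sup>2) ^ (m-1) * real j ^ (m-1))"
        by (rule sum_mono) (rule bj)
      also have "\<dots> = (c * A\<^sup>2) ^ (m-1) * (\<Sum>j=1..n-1. real j ^ (m-1))" by (simp add: sum_distrib_left)
      also have "\<dots> \<le> (c * A\<^sup>2) ^ (m-1) * (\<Sum>j<n. real j ^ (m-1))"
        by (intro mult_left_mono sum_mono2) (use cpos in auto)
      also have "\<dots> \<le> (c * A\<^sup>2) ^ (m-1) * (real n ^ m / real m)"
        by (intro mult_left_mono sum_pow_le[OF m]) (use cpos in auto)
      finally have sb: "(\<Sum>j=1..n-1. max (s j) (s (j-1)) ^ (2*m-2)) \<le> (c * A\<^sup>2) ^ (m-1) * (real n ^ m / real m)" .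
      have coef: "real m * (2 * real m - 1) * A\<^sup>2 \<ge> 0" using m by simp
      have A1: "s n ^ (2*m) \<le> real m * (2 * real m - 1) * A\<^sup>2 * (s n ^ (2*m-2) + (c * A\<^sup>2) ^ (m-1) * (real n ^ m / real m))"
      proof -
        have "s n ^ (2*m) \<le> real m * (2 * real m - 1) * A\<^sup>2 * (s n ^ (2*m-2) + (\<Sum>j=1..n-1. max (s j) (s (j-1)) ^ (2*m-2)))"
          using key[of n] unfolding sumeq .
        also have "\<dots> \<le> real m * (2 * real m - 1) * A\<^sup>2 * (s n ^ (2*m-2) + (c * A\<^sup>2) ^ (m-1) * (real n ^ m / real m))"
          by (intro mult_left_mono add_left_mono sb coef)
        finally show ?thesis .
      qed
      have "(c * A\<^sup>2) ^ (m-1) * real n ^ (m-1) = (c * real n * A\<^sup>2) ^ (m-1)" by (simp add: power_mult_distrib mult_ac)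
      also have "\<dots> \<le> (s n ^ 2) ^ (m-1)" using big cpos by (intro power_mono) auto
      also have "\<dots> = s n ^ (2*m-2)" by (simp add: power_mult[symmetric] right_diff_distrib' mult.commute)
      finally have A2: "(c * A\<^sup>2) ^ (m-1) * real n ^ (m-1) \<le> s n ^ (2*m-2)" .
      have "(c * A\<^sup>2) ^ (m-1) * (real n ^ m / real m) = (real n / real m) * ((c * A\<^sup>2) ^ (m-1) * real n ^ (m-1))"
        using m by (simp add: power_eq_if)
      also have "\<dots> \<le> (real n / real m) * s n ^ (2*m-2)" using A2 by (intro mult_left_mono) auto
      finally have A3: "(c * A\<^sup>2) ^ (m-1) * (real n ^ m / real m) \<le> (real n / real m) * s n ^ (2*m-2)" .
      have "s n ^ (2*m) \<le> real m * (2 * real m - 1) * A\<^sup>2 * (s n ^ (2*m-2) + (real n / real m) * s n ^ (2*m-2))"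
        using A1 A3 coef by (smt (verit) mult_left_mono)
      also have "\<dots> = (2 * real m - 1) * A\<^sup>2 * (real m + real n) * s n ^ (2*m-2)"
        using m by (simp add: field_simps)
      finally have A4': "s n ^ (2*m) \<le> ((2 * real m - 1) * (real m + real n) * A\<^sup>2) * s n ^ (2*m-2)"
        by (simp add: mult_ac)
      have pe: "s n ^ 2 * s n ^ (2*m-2) = s n ^ (2*m)"
      proof -
        have "2 + (2*m-2) = 2*m" using m by simp
        then show ?thesis by (metis power_add)
      qed
      have A4: "s n ^ 2 * s n ^ (2*m-2) \<le> ((2 * real m - 1) * (real m + real n) * A\<^sup>2) * s n ^ (2*m-2)"
        using A4' pe by simp
      have "s n ^ (2*m-2) > 0" using sn_pos by simp
      then have A5: "s n ^ 2 \<le> (2 * real m - 1) * (real m + real n) * A\<^sup>2" using A4 by simp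
      have Apos: "A\<^sup>2 > 0"
      proof (rule ccontr)
        assume "\<not> A\<^sup>2 > 0"
        then have "A\<^sup>2 = 0" by (simp add: not_less)
        then have "s n ^ 2 \<le> 0" using A5 by simp
        moreover have "s n ^ 2 > 0" using sn_pos by simp
        ultimately show False by simp
      qed
      have "c * real n < (2 * real m - 1) * (real m + real n)" using big A5 Apos
        by (smt (verit) mult_right_mono mult_right_less_imp_less)
      moreover have "c * real n \<ge> (2 * real m - 1) * (real m + real n)"
      proof -
        have "real n \<ge> 3 * real m" using ngt unfolding c_def by simp
        then have "(real m + 1) * real n \<ge> (real m + 1) * (3 * real m)" by (intro mult_left_mono) auto
        moreover have "(real m + 1) * (3 * real m) \<ge> real m * (2 * real m - 1)" using m by (simp add: algebra_simps)
        ultimately have "(real m + 1) * real n \<ge> real m * (2 * real m - 1)" by linarith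
        then show ?thesis unfolding c_def by (simp add: algebra_simps)
      qed
      ultimately show False by simp
    qed
  qed
qed



lemma pdiff_bound: "\<bar>(a::real)^n - b^n\<bar> \<le> \<bar>a - b\<bar> * (\<Sum>i<n. \<bar>a\<bar>^i * \<bar>b\<bar>^(n - Suc i))"
proof -
  have "a^n - b^n = (a - b) * (\<Sum>i<n. b^(n - Suc i) * a^i)" by (rule power_diff_sumr2)
  then have "\<bar>a^n - b^n\<bar> = \<bar>a - b\<bar> * \<bar>\<Sum>i<n. b^(n - Suc i) * a^i\<bar>" by (simp add: abs_mult)
  also have "\<bar>\<Sum>i<n. b^(n - Suc i) * a^i\<bar> \<le> (\<Sum>i<n. \<bar>a\<bar>^i * \<bar>b\<bar>^(n - Suc i))"
    by (rule order_trans[OF sum_abs]) (simp add: abs_mult power_abs mult.commute)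
  finally show ?thesis by (simp add: mult_left_mono)
qed

lemma R_expand:
  fixes a b :: real
  shows "a^p - b^p - real p * b^(p-1) * (a-b) = (a-b)^2 * (\<Sum>k<p. \<Sum>i<k. a^i * b^(p-2-i))"
proof -
  have e1: "a^p - b^p = (a - b) * (\<Sum>k<p. b^(p - Suc k) * a^k)" by (rule power_diff_sumr2)
  have e2: "real p * b^(p-1) = (\<Sum>k<p. b^(p-1))" by simp
  have e3: "b^(p - Suc k) * a^k - b^(p-1) = (a-b) * (\<Sum>i<k. a^i * b^(p-2-i))" if "k < p" for k
  proof -
    have "b^(p-1) = b^(p - Suc k) * b^k" using that by (simp add: power_add[symmetric])
    then have "b^(p - Suc k) * a^k - b^(p-1) = b^(p - Suc k) * (a^k - b^k)" by (simp add: algebra_simps)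
    also have "a^k - b^k = (a - b) * (\<Sum>i<k. b^(k - Suc i) * a^i)" by (rule power_diff_sumr2)
    also have "b^(p - Suc k) * ((a - b) * (\<Sum>i<k. b^(k - Suc i) * a^i)) = (a-b) * (\<Sum>i<k. b^(p - Suc k) * b^(k - Suc i) * a^i)"
      by (simp add: sum_distrib_left mult_ac)
    also have "(\<Sum>i<k. b^(p - Suc k) * b^(k - Suc i) * a^i) = (\<Sum>i<k. a^i * b^(p-2-i))"
    proof (rule sum.cong)
      fix i assume "i \<in> {..<k}"
      then have "(p - Suc k) + (k - Suc i) = p - 2 - i" using that by auto
      then show "b^(p - Suc k) * b^(k - Suc i) * a^i = a^i * b^(p-2-i)" by (metis power_add mult.commute)
    qed simp
    finally show ?thesis .
  qed
  have "a^p - b^p - real p * b^(p-1) * (a-b) = (a-b) * (\<Sum>k<p. b^(p - Suc k) * a^k - b^(p-1))"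
    unfolding e1 by (simp add: sum_subtractf algebra_simps)
  also have "\<dots> = (a-b) * (\<Sum>k<p. (a-b) * (\<Sum>i<k. a^i * b^(p-2-i)))"
    by (intro arg_cong[where f="\<lambda>z. (a-b) * z"] sum.cong refl) (metis lessThan_iff e3)
  also have "\<dots> = (a-b)^2 * (\<Sum>k<p. \<Sum>i<k. a^i * b^(p-2-i))"
    by (simp add: sum_distrib_left[symmetric] power2_eq_square mult_ac)
  finally show ?thesis .
qed

lemma R_bound:
  fixes a b :: real
  shows "\<bar>a^p - b^p - real p * b^(p-1) * (a-b)\<bar> \<le> (a-b)^2 * (\<Sum>k<p. \<Sum>i<k. \<bar>a\<bar>^i * \<bar>b\<bar>^(p-2-i))"
proof -
  have "\<bar>\<Sum>k<p. \<Sum>i<k. a^i * b^(p-2-i)\<bar> \<le> (\<Sum>k<p. \<Sum>i<k. \<bar>a\<bar>^i * \<bar>b\<bar>^(p-2-i))"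
    by (rule order_trans[OF sum_abs], rule sum_mono, rule order_trans[OF sum_abs]) (simp add: abs_mult power_abs)
  then show ?thesis unfolding R_expand by (simp add: abs_mult mult_left_mono)
qed

lemma gauss_real: "(\<Sum>k<p. real k) = real p * (real p - 1) / 2"
  by (induct p) (simp_all add: field_simps)



locale setting =
  fixes M :: "'a measure" and G :: "nat \<Rightarrow> 'a measure" and X :: "nat \<Rightarrow> 'a \<Rightarrow> real"
    and m :: nat and A :: real
  assumes prob: "prob_space M"
    and subalg: "\<And>i. 1 \<le> i \<Longrightarrow> subalgebra M (G i)"
    and mono: "\<And>i j. 1 \<le> i \<Longrightarrow> i \<le> j \<Longrightarrow> sets (G i) \<subseteq> sets (G j)"
    and Xmeas: "\<And>j. 1 \<le> j \<Longrightarrow> X j \<in> borel_measurable (G j)"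
    and Xlp: "\<And>j. 1 \<le> j \<Longrightarrow> lp M (2*m) (X j)"
    and Ylp: "\<And>i j. 1 \<le> i \<Longrightarrow> i \<le> j \<Longrightarrow> lp M (2*m) (real_cond_exp M (G i) (X j))"
    and m: "1 \<le> m"
    and Abound: "\<And>i k. 1 \<le> i \<Longrightarrow> (\<Sum>j=i..k. pn M (2*m) (real_cond_exp M (G i) (X j))) \<le> A"
begin

definition "S n x = (\<Sum>j=1..n. X j x)"
definition "Y i j = real_cond_exp M (G i) (X j)"
definition "D j x = real (2*m) * (S j x ^ (2*m-1) - S (j-1) x ^ (2*m-1))"
definition "R j x = S j x ^ (2*m) - S (j-1) x ^ (2*m) - real (2*m) * S (j-1) x ^ (2*m-1) * X j x"
definition "V n j x = (\<Sum>i\<in>{j<..n}. Y j i x)"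
definition "s k = pn M (2*m) (S k)"
definition "mx j = max (s j) (s (j-1)) ^ (2*m-2)"

lemma p_pos: "0 < 2*m" using m by simp
lemma p1: "1 \<le> 2*m" using m by simp

lemma fin: "finite_measure M" using prob by (simp add: prob_space_def)

lemma sfs: "1 \<le> i \<Longrightarrow> sigma_finite_subalgebra M (G i)"
  by (rule finite_measure_subalgebra_is_sigma_finite)
     (simp add: finite_measure_subalgebra_def finite_measure_subalgebra_axioms_def fin subalg)

lemma Xm[measurable]: "1 \<le> j \<Longrightarrow> X j \<in> borel_measurable M"
  using Xlp unfolding lp_def by auto

lemma XmG: assumes "1 \<le> k" "k \<le> j" shows "X k \<in> borel_measurable (G j)"
proof -
  have "subalgebra (G j) (G k)" using subalg[of j] subalg[of k] mono[of k j] assms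
    unfolding subalgebra_def by auto
  then show ?thesis using Xmeas[OF assms(1)] by (rule measurable_from_subalg)
qed

lemma SmG: assumes "k \<le> j" "1 \<le> j" shows "S k \<in> borel_measurable (G j)"
  unfolding S_def[abs_def] using assms by (intro borel_measurable_sum XmG) auto

lemma Xint: "1 \<le> j \<Longrightarrow> integrable M (X j)" using lp_integrable[OF fin p1 Xlp] .

lemma Slp: "lp M (2*m) (S n)" unfolding S_def[abs_def] by (intro lp_sum p_pos Xlp) auto

lemma Sm[measurable]: "S n \<in> borel_measurable M" using Slp unfolding lp_def by auto

lemma S0: "S 0 x = 0" unfolding S_def by simp
lemma SSuc: "S (Suc n) x = S n x + X (Suc n) x" unfolding S_def by simp
lemma Sj: "1 \<le> j \<Longrightarrow> S j x = S (j-1) x + X j x" using SSuc[of "j-1"] by simp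

lemma YjjAE: "1 \<le> j \<Longrightarrow> AE x in M. Y j j x = X j x"
  unfolding Y_def using sigma_finite_subalgebra.real_cond_exp_F_meas[OF sfs Xint Xmeas] .

lemma pnX: assumes "1 \<le> j" shows "pn M (2*m) (X j) = pn M (2*m) (Y j j)"
proof (rule pn_cong_AE)
  from YjjAE[OF assms] show "AE x in M. X j x = Y j j x" by eventually_elim simp
qed (use assms in \<open>auto simp: Y_def\<close>)

lemma Vlp: "1 \<le> j \<Longrightarrow> lp M (2*m) (V n j)"
  unfolding V_def[abs_def] Y_def by (intro lp_sum p_pos Ylp) auto

lemma alpha_beta: assumes "1 \<le> j" "j \<le> n"
  shows "pn M (2*m) (X j) + pn M (2*m) (V n j) \<le> A"
proof -
  have "pn M (2*m) (V n j) \<le> (\<Sum>i\<in>{j<..n}. pn M (2*m) (Y j i))"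
    unfolding V_def[abs_def] by (rule minkowski_sum[OF p1]) (use assms in \<open>auto simp: Y_def intro: Ylp\<close>)
  moreover have "{j..n} = insert j {j<..n}" using assms by auto
  then have "(\<Sum>i=j..n. pn M (2*m) (Y j i)) = pn M (2*m) (Y j j) + (\<Sum>i\<in>{j<..n}. pn M (2*m) (Y j i))"
    by simp
  moreover have "(\<Sum>i=j..n. pn M (2*m) (Y j i)) \<le> A" using Abound[OF assms(1)] unfolding Y_def .
  ultimately show ?thesis using pnX[OF assms(1)] by simp
qed

lemma mx_ge: assumes "l \<le> 2*m-2" shows "s j ^ l * s (j-1) ^ (2*m-2-l) \<le> mx j"
proof -
  have h0: "0 \<le> s j" "0 \<le> s (j-1)" by (simp_all add: s_def pn_nonneg)
  have "s j ^ l * s (j-1) ^ (2*m-2-l) \<le> max (s j) (s (j-1)) ^ l * max (s j) (s (j-1)) ^ (2*m-2-l)"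
    using h0 by (intro mult_mono power_mono) auto
  also have "\<dots> = mx j"
  proof -
    have "l + (2*m-2-l) = 2*m-2" using assms by simp
    then show ?thesis unfolding mx_def by (metis power_add)
  qed
  finally show ?thesis .
qed

lemma mx_nonneg: "0 \<le> mx j"
proof -
  have "0 \<le> max (s j) (s (j-1))" by (simp add: s_def pn_nonneg le_max_iff_disj)
  then show ?thesis unfolding mx_def by simp
qed

lemma D_bound: assumes j: "1 \<le> j" and W: "lp M (2*m) W"
  shows "integrable M (\<lambda>x. D j x * W x)"
    "(\<integral>x. D j x * W x \<partial>M) \<le> real (2*m) * real (2*m-1) * pn M (2*m) (X j) * pn M (2*m) W * mx j"
proof -
  let ?p = "2*m"
  define T where "T l x = \<bar>X j x\<bar>^1 * \<bar>W x\<bar>^1 * \<bar>S j x\<bar>^l * \<bar>S (j-1) x\<bar>^(?p-2-l)" for l x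
  have hT: "integrable M (T l) \<and> (\<integral>x. T l x \<partial>M) \<le> pn M ?p (X j) ^ 1 * pn M ?p W ^ 1 * s j ^ l * s (j-1) ^ (?p-2-l)"
    if "l < ?p - 1" for l
    using holder4[of ?p 1 1 l "?p-2-l" M "X j" W "S j" "S (j-1)"] that p_pos Xlp[OF j] W Slp
    unfolding T_def s_def by auto
  have Wm[measurable]: "W \<in> borel_measurable M" using W unfolding lp_def by auto
  have Dm[measurable]: "D j \<in> borel_measurable M" unfolding D_def[abs_def] by measurable
  have pw: "\<bar>D j x * W x\<bar> \<le> real ?p * (\<Sum>l<?p-1. T l x)" for x
  proof -
    have "\<bar>D j x\<bar> \<le> real ?p * (\<bar>X j x\<bar> * (\<Sum>l<?p-1. \<bar>S j x\<bar>^l * \<bar>S (j-1) x\<bar>^(?p - 1 - Suc l)))"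
      unfolding D_def using pdiff_bound[of "S j x" "?p-1" "S (j-1) x"] Sj[OF j, of x]
      by (auto simp: abs_mult intro!: mult_left_mono)
    then have "\<bar>D j x * W x\<bar> \<le> real ?p * (\<bar>X j x\<bar> * (\<Sum>l<?p-1. \<bar>S j x\<bar>^l * \<bar>S (j-1) x\<bar>^(?p - 1 - Suc l))) * \<bar>W x\<bar>"
      by (simp add: abs_mult mult_right_mono)
    also have "\<dots> = real ?p * (\<Sum>l<?p-1. T l x)"
      unfolding T_def by (simp add: sum_distrib_left sum_distrib_right mult_ac)
    finally show ?thesis .
  qed
  have intT: "integrable M (\<lambda>x. real ?p * (\<Sum>l<?p-1. T l x))" using hT by auto
  show int: "integrable M (\<lambda>x. D j x * W x)"
    by (rule Bochner_Integration.integrable_bound[OF intT]) (use pw in \<open>auto intro!: AE_I2 order_trans[OF _ abs_ge_self]\<close>)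
  have "(\<integral>x. D j x * W x \<partial>M) \<le> (\<integral>x. real ?p * (\<Sum>l<?p-1. T l x) \<partial>M)"
    by (rule integral_mono[OF int intT]) (use pw in \<open>auto simp: abs_le_iff\<close>)
  also have "\<dots> = real ?p * (\<Sum>l<?p-1. (\<integral>x. T l x \<partial>M))"
    using hT by (simp add: Bochner_Integration.integral_sum)
  also have "\<dots> \<le> real ?p * (\<Sum>l<?p-1. pn M ?p (X j) * pn M ?p W * mx j)"
  proof (intro mult_left_mono sum_mono)
    fix l assume "l \<in> {..<?p-1}"
    then have l: "l < ?p - 1" by simp
    have "(\<integral>x. T l x \<partial>M) \<le> pn M ?p (X j) * pn M ?p W * (s j ^ l * s (j-1) ^ (?p-2-l))"
      using hT[OF l] by (simp add: mult_ac)
    also have "\<dots> \<le> pn M ?p (X j) * pn M ?p W * mx j"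
      by (intro mult_left_mono mx_ge) (use l in \<open>auto simp: pn_nonneg\<close>)
    finally show "(\<integral>x. T l x \<partial>M) \<le> pn M ?p (X j) * pn M ?p W * mx j" .
  qed simp
  also have "\<dots> = real (2*m) * real (2*m-1) * pn M (2*m) (X j) * pn M (2*m) W * mx j"
    by (simp add: mult_ac)
  finally show "(\<integral>x. D j x * W x \<partial>M) \<le> real (2*m) * real (2*m-1) * pn M (2*m) (X j) * pn M (2*m) W * mx j" .
qed


lemma R_bnd: assumes j: "1 \<le> j"
  shows "integrable M (R j)"
    "(\<integral>x. R j x \<partial>M) \<le> real (2*m) * (real (2*m) - 1) / 2 * pn M (2*m) (X j) ^ 2 * mx j"
proof -
  let ?p = "2*m"
  define T where "T i x = \<bar>X j x\<bar>^2 * \<bar>X j x\<bar>^0 * \<bar>S j x\<bar>^i * \<bar>S (j-1) x\<bar>^(?p-2-i)" for i x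
  have hT: "integrable M (T i) \<and> (\<integral>x. T i x \<partial>M) \<le> pn M ?p (X j) ^ 2 * pn M ?p (X j) ^ 0 * s j ^ i * s (j-1) ^ (?p-2-i)"
    if "i \<le> ?p - 2" for i
    using holder4[of ?p 2 0 i "?p-2-i" M "X j" "X j" "S j" "S (j-1)"] that p_pos Xlp[OF j] Slp m
    unfolding T_def s_def by auto
  have Rm[measurable]: "R j \<in> borel_measurable M" unfolding R_def[abs_def] using j by measurable
  have pw: "\<bar>R j x\<bar> \<le> (\<Sum>k<?p. \<Sum>i<k. T i x)" for x
  proof -
    have "\<bar>R j x\<bar> \<le> (S j x - S (j-1) x)^2 * (\<Sum>k<?p. \<Sum>i<k. \<bar>S j x\<bar>^i * \<bar>S (j-1) x\<bar>^(?p-2-i))"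
      unfolding R_def using R_bound[of "S j x" ?p "S (j-1) x"] Sj[OF j, of x] by simp
    also have "\<dots> = (\<Sum>k<?p. \<Sum>i<k. T i x)"
      unfolding T_def using Sj[OF j, of x] by (simp add: sum_distrib_left mult_ac)
    finally show ?thesis .
  qed
  have Tle: "i \<in> {..<k} \<Longrightarrow> k \<in> {..<?p} \<Longrightarrow> i \<le> ?p - 2" for i k by auto
  have intT: "integrable M (\<lambda>x. \<Sum>k<?p. \<Sum>i<k. T i x)"
  proof (intro Bochner_Integration.integrable_sum)
    fix k i assume "k \<in> {..<?p}" "i \<in> {..<k}"
    then show "integrable M (\<lambda>x. T i x)" using hT[of i] by auto
  qed
  show int: "integrable M (R j)"
    by (rule Bochner_Integration.integrable_bound[OF intT]) (use pw in \<open>auto intro!: AE_I2 order_trans[OF _ abs_ge_self]\<close>)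
  have "(\<integral>x. R j x \<partial>M) \<le> (\<integral>x. (\<Sum>k<?p. \<Sum>i<k. T i x) \<partial>M)"
    by (rule integral_mono[OF int intT]) (use pw in \<open>auto simp: abs_le_iff\<close>)
  also have "\<dots> = (\<Sum>k<?p. \<Sum>i<k. (\<integral>x. T i x \<partial>M))"
  proof -
    have "(\<integral>x. (\<Sum>k<?p. \<Sum>i<k. T i x) \<partial>M) = (\<Sum>k<?p. (\<integral>x. (\<Sum>i<k. T i x) \<partial>M))"
      using hT Tle by (intro Bochner_Integration.integral_sum Bochner_Integration.integrable_sum) blast
    also have "\<dots> = (\<Sum>k<?p. \<Sum>i<k. (\<integral>x. T i x \<partial>M))"
      using hT Tle by (intro sum.cong refl Bochner_Integration.integral_sum) blast
    finally show ?thesis .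
  qed
  also have "\<dots> \<le> (\<Sum>k<?p. \<Sum>i<k. pn M ?p (X j) ^ 2 * mx j)"
  proof (intro sum_mono)
    fix k i assume "k \<in> {..<?p}" "i \<in> {..<k}"
    then have i: "i \<le> ?p - 2" by auto
    have "(\<integral>x. T i x \<partial>M) \<le> pn M ?p (X j) ^ 2 * (s j ^ i * s (j-1) ^ (?p-2-i))"
      using hT[OF i] by (simp add: mult_ac)
    also have "\<dots> \<le> pn M ?p (X j) ^ 2 * mx j"
      by (intro mult_left_mono mx_ge i) simp
    finally show "(\<integral>x. T i x \<partial>M) \<le> pn M ?p (X j) ^ 2 * mx j" .
  qed
  also have "\<dots> = (\<Sum>k<?p. real k) * (pn M ?p (X j) ^ 2 * mx j)"
    by (simp add: sum_distrib_right)
  also have "\<dots> = real (2*m) * (real (2*m) - 1) / 2 * pn M (2*m) (X j) ^ 2 * mx j"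
    unfolding gauss_real by simp
  finally show "(\<integral>x. R j x \<partial>M) \<le> real (2*m) * (real (2*m) - 1) / 2 * pn M (2*m) (X j) ^ 2 * mx j" .
qed

lemma DmG: assumes "1 \<le> j" shows "D j \<in> borel_measurable (G j)"
proof -
  have [measurable]: "S j \<in> borel_measurable (G j)" "S (j-1) \<in> borel_measurable (G j)"
    using SmG assms by auto
  show ?thesis unfolding D_def[abs_def] by measurable
qed

lemma DX_eq: assumes "1 \<le> j" "j \<le> i"
  shows "(\<integral>x. D j x * X i x \<partial>M) = (\<integral>x. D j x * Y j i x \<partial>M)"
  unfolding Y_def
  by (rule sigma_finite_subalgebra.real_cond_exp_intg(2)[OF sfs, symmetric])
     (use assms D_bound(1)[OF assms(1) Xlp] DmG in auto)

lemma Dsum: "(\<Sum>j=1..n. D j x) = real (2*m) * S n x ^ (2*m-1)"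
proof (induct n)
  case 0 then show ?case using m by (simp add: S0)
next
  case (Suc n)
  have "(\<Sum>j=1..Suc n. D j x) = (\<Sum>j=1..n. D j x) + D (Suc n) x" by simp
  then show ?case using Suc by (simp add: D_def algebra_simps)
qed

lemma main_id: "(\<integral>x. S n x ^ (2*m) \<partial>M) = (\<Sum>j=1..n. (\<integral>x. D j x * V n j x \<partial>M) + (\<integral>x. R j x \<partial>M))"
proof (induct n)
  case 0 then show ?case using m by (simp add: S0)
next
  case (Suc n)
  let ?p = "2*m"
  have ev: "even ?p" by simp
  have intS: "integrable M (\<lambda>x. S n x ^ ?p)"
    using Slp[of n] unfolding lp_def by (simp add: power_even_abs[OF ev])
  have intDX: "integrable M (\<lambda>x. D j x * X (Suc n) x)" if "j \<in> {1..n}" for j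
    using D_bound(1)[of j "X (Suc n)"] Xlp that by auto
  have intDY: "integrable M (\<lambda>x. D j x * Y j (Suc n) x)" if "j \<in> {1..n}" for j
    using D_bound(1)[of j "Y j (Suc n)"] Ylp that unfolding Y_def by auto
  have intDV: "integrable M (\<lambda>x. D j x * V n j x)" if "j \<in> {1..n}" for j
    using D_bound(1)[of j "V n j"] Vlp that by auto
  have pw: "S (Suc n) x ^ ?p = S n x ^ ?p + (\<Sum>j=1..n. D j x * X (Suc n) x) + R (Suc n) x" for x
    unfolding R_def sum_distrib_right[symmetric] Dsum by simp
  have "(\<integral>x. S (Suc n) x ^ ?p \<partial>M) = (\<integral>x. S n x ^ ?p \<partial>M) + (\<Sum>j=1..n. (\<integral>x. D j x * X (Suc n) x \<partial>M)) + (\<integral>x. R (Suc n) x \<partial>M)"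
  proof -
    have i2: "integrable M (\<lambda>x. \<Sum>j=1..n. D j x * X (Suc n) x)" using intDX by (intro Bochner_Integration.integrable_sum) auto
    have i3: "integrable M (R (Suc n))" using R_bnd(1)[of "Suc n"] by simp
    have "(\<integral>x. S (Suc n) x ^ ?p \<partial>M) = (\<integral>x. S n x ^ ?p + (\<Sum>j=1..n. D j x * X (Suc n) x) \<partial>M) + (\<integral>x. R (Suc n) x \<partial>M)"
      unfolding pw using intS i2 i3 by (intro Bochner_Integration.integral_add) auto
    also have "(\<integral>x. S n x ^ ?p + (\<Sum>j=1..n. D j x * X (Suc n) x) \<partial>M) = (\<integral>x. S n x ^ ?p \<partial>M) + (\<integral>x. (\<Sum>j=1..n. D j x * X (Suc n) x) \<partial>M)"
      using intS i2 by (rule Bochner_Integration.integral_add)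
    also have "(\<integral>x. (\<Sum>j=1..n. D j x * X (Suc n) x) \<partial>M) = (\<Sum>j=1..n. (\<integral>x. D j x * X (Suc n) x \<partial>M))"
      using intDX by (intro Bochner_Integration.integral_sum) auto
    finally show ?thesis .
  qed
  also have "(\<Sum>j=1..n. (\<integral>x. D j x * X (Suc n) x \<partial>M)) = (\<Sum>j=1..n. (\<integral>x. D j x * Y j (Suc n) x \<partial>M))"
    by (rule sum.cong) (auto intro: DX_eq)
  finally have L: "(\<integral>x. S (Suc n) x ^ ?p \<partial>M) = (\<integral>x. S n x ^ ?p \<partial>M) + (\<Sum>j=1..n. (\<integral>x. D j x * Y j (Suc n) x \<partial>M)) + (\<integral>x. R (Suc n) x \<partial>M)" .
  have Veq: "V (Suc n) j x = V n j x + Y j (Suc n) x" if "j \<in> {1..n}" for j x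
  proof -
    have "{j<..Suc n} = insert (Suc n) {j<..n}" using that by auto
    then show ?thesis unfolding V_def by simp
  qed
  have V0: "V (Suc n) (Suc n) x = 0" for x unfolding V_def by simp
  have "(\<Sum>j=1..Suc n. (\<integral>x. D j x * V (Suc n) j x \<partial>M) + (\<integral>x. R j x \<partial>M))
      = (\<Sum>j=1..n. (\<integral>x. D j x * V (Suc n) j x \<partial>M) + (\<integral>x. R j x \<partial>M)) + (\<integral>x. R (Suc n) x \<partial>M)"
    by (simp add: V0)
  also have "(\<Sum>j=1..n. (\<integral>x. D j x * V (Suc n) j x \<partial>M) + (\<integral>x. R j x \<partial>M))
      = (\<Sum>j=1..n. ((\<integral>x. D j x * V n j x \<partial>M) + (\<integral>x. R j x \<partial>M)) + (\<integral>x. D j x * Y j (Suc n) x \<partial>M))"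
  proof (rule sum.cong)
    fix j assume j: "j \<in> {1..n}"
    have "(\<integral>x. D j x * V (Suc n) j x \<partial>M) = (\<integral>x. D j x * V n j x + D j x * Y j (Suc n) x \<partial>M)"
      using Veq[OF j] by (simp add: distrib_left)
    also have "\<dots> = (\<integral>x. D j x * V n j x \<partial>M) + (\<integral>x. D j x * Y j (Suc n) x \<partial>M)"
      using intDV[OF j] intDY[OF j] by simp
    finally show "(\<integral>x. D j x * V (Suc n) j x \<partial>M) + (\<integral>x. R j x \<partial>M) = ((\<integral>x. D j x * V n j x \<partial>M) + (\<integral>x. R j x \<partial>M)) + (\<integral>x. D j x * Y j (Suc n) x \<partial>M)"
      by simp
  qed simp
  finally show ?case using L Suc by (simp add: sum.distrib)
qed


lemma key: "(\<integral>x. S n x ^ (2*m) \<partial>M) \<le> real m * (2 * real m - 1) * A\<^sup>2 * (\<Sum>j=1..n. mx j)"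
proof -
  have "(\<integral>x. S n x ^ (2*m) \<partial>M) = (\<Sum>j=1..n. (\<integral>x. D j x * V n j x \<partial>M) + (\<integral>x. R j x \<partial>M))"
    by (rule main_id)
  also have "\<dots> \<le> (\<Sum>j=1..n. real m * (2 * real m - 1) * A\<^sup>2 * mx j)"
  proof (rule sum_mono)
    fix j assume j: "j \<in> {1..n}"
    define a where "a = pn M (2*m) (X j)"
    define b where "b = pn M (2*m) (V n j)"
    have ab: "0 \<le> a" "0 \<le> b" "a + b \<le> A" unfolding a_def b_def using alpha_beta[of j n] j
      by (auto simp: pn_nonneg)
    have r1: "real (2*m-1) = 2 * real m - 1" using m by (simp add: of_nat_diff)
    have d: "(\<integral>x. D j x * V n j x \<partial>M) \<le> real (2*m) * real (2*m-1) * a * b * mx j"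
      unfolding a_def b_def using D_bound(2)[of j "V n j"] Vlp j by auto
    have r: "(\<integral>x. R j x \<partial>M) \<le> real (2*m) * (real (2*m) - 1) / 2 * a ^ 2 * mx j"
      unfolding a_def using R_bnd(2)[of j] j by auto
    have "(\<integral>x. D j x * V n j x \<partial>M) + (\<integral>x. R j x \<partial>M) \<le> real m * (2 * real m - 1) * (a^2 + 2*a*b) * mx j"
      using d r unfolding r1 by (simp add: algebra_simps)
    also have "\<dots> \<le> real m * (2 * real m - 1) * A\<^sup>2 * mx j"
    proof (intro mult_right_mono mult_left_mono mx_nonneg)
      have "a^2 + 2*a*b \<le> a^2 + 2*a*(A - a)" using ab by (intro add_left_mono mult_left_mono) auto
      also have "\<dots> = A\<^sup>2 - (A - a)\<^sup>2" by (simp add: power2_eq_square algebra_simps)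
      finally show "a^2 + 2*a*b \<le> A\<^sup>2" by (smt (verit) zero_le_power2)
      show "0 \<le> real m * (2 * real m - 1)" using m by simp
    qed
    finally show "(\<integral>x. D j x * V n j x \<partial>M) + (\<integral>x. R j x \<partial>M) \<le> real m * (2 * real m - 1) * A\<^sup>2 * mx j" .
  qed
  also have "\<dots> = real m * (2 * real m - 1) * A\<^sup>2 * (\<Sum>j=1..n. mx j)" by (simp add: sum_distrib_left)
  finally show ?thesis .
qed

lemma s_pow: "s n ^ (2*m) = (\<integral>x. S n x ^ (2*m) \<partial>M)"
  unfolding s_def using pn_pow[OF p_pos, of M "S n"] by (simp add: power_even_abs)

lemma one_dim: "(\<integral>x. S n x ^ (2*m) \<partial>M) \<le> (3 * real m * real n * A\<^sup>2) ^ m"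
proof -
  have pX: "pn M (2*m) (X j) \<le> A" if "1 \<le> j" for j
    using alpha_beta[of j j] that pn_nonneg[of M "2*m" "V j j"] by linarith
  have sb: "s n ^ 2 \<le> 3 * real m * real n * A\<^sup>2"
  proof (rule seq_bound[OF m])
    show "s 0 = 0" unfolding s_def pn_def S_def using m by simp
    show "0 \<le> s k" for k unfolding s_def by (rule pn_nonneg)
    show "s k \<le> real k * A" for k
    proof -
      have "s k \<le> (\<Sum>j=1..k. pn M (2*m) (X j))" unfolding s_def S_def[abs_def]
        by (rule minkowski_sum[OF p1]) (auto intro: Xlp)
      also have "\<dots> \<le> (\<Sum>j=1..k. A)" by (rule sum_mono) (auto intro: pX)
      finally show ?thesis by simp
    qed
    show "s k ^ (2*m) \<le> real m * (2 * real m - 1) * A\<^sup>2 * (\<Sum>j=1..k. max (s j) (s (j-1)) ^ (2*m-2))" for k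
      using key[of k] s_pow[of k] unfolding mx_def by simp
  qed
  have "(\<integral>x. S n x ^ (2*m) \<partial>M) = (s n ^ 2) ^ m" unfolding s_pow[symmetric] by (simp add: power_mult)
  also have "\<dots> \<le> (3 * real m * real n * A\<^sup>2) ^ m" by (intro power_mono sb) simp
  finally show ?thesis .
qed

end


lemma convex_pow_nonneg: "convex_on {0::real..} (\<lambda>x. x ^ m)"
proof (cases "even m")
  case True then show ?thesis using convex_power_even convex_on_subset by blast
next
  case False then show ?thesis using convex_power_odd by blast
qed

lemma power_mean:
  fixes y :: "'d::finite \<Rightarrow> real"
  assumes "\<And>c. 0 \<le> y c" "1 \<le> m"
  shows "(\<Sum>c\<in>UNIV. y c) ^ m \<le> real CARD('d) ^ (m-1) * (\<Sum>c\<in>UNIV. y c ^ m)"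
proof -
  define d where "d = real CARD('d)"
  have dpos: "d > 0" unfolding d_def by simp
  have "(\<Sum>c\<in>UNIV. (1/d) *\<^sub>R y c) ^ m \<le> (\<Sum>c\<in>UNIV. (1/d) * y c ^ m)"
    by (rule convex_on_sum[OF _ _ convex_pow_nonneg]) (use assms dpos in \<open>auto simp: d_def\<close>)
  moreover have "(\<Sum>c\<in>UNIV. (1/d) *\<^sub>R y c) = (\<Sum>c\<in>UNIV. y c) / d"
    by (simp add: sum_divide_distrib)
  moreover have "(\<Sum>c\<in>UNIV. (1/d) * y c ^ m) = (\<Sum>c\<in>UNIV. y c ^ m) / d"
    by (simp add: sum_divide_distrib)
  ultimately have H: "((\<Sum>c\<in>UNIV. y c) / d) ^ m \<le> (\<Sum>c\<in>UNIV. y c ^ m) / d" by simp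
  have "(\<Sum>c\<in>UNIV. y c) ^ m = d ^ m * ((\<Sum>c\<in>UNIV. y c) / d) ^ m"
    using dpos by (simp add: power_divide)
  also have "\<dots> \<le> d ^ m * ((\<Sum>c\<in>UNIV. y c ^ m) / d)"
    using H dpos by (intro mult_left_mono) auto
  also have "d ^ m * ((\<Sum>c\<in>UNIV. y c ^ m) / d) = d ^ (m-1) * (\<Sum>c\<in>UNIV. y c ^ m)"
    using dpos assms(2) by (simp add: power_eq_if)
  finally show ?thesis unfolding d_def .
qed

lemma norm_pow_le:
  fixes v :: "real ^ 'd"
  assumes "1 \<le> m"
  shows "norm v ^ (2*m) \<le> real CARD('d) ^ (m-1) * (\<Sum>c\<in>UNIV. (v $ c) ^ (2*m))"
proof -
  have n2: "norm v ^ 2 = (\<Sum>c\<in>UNIV. (v $ c) ^ 2)"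
    unfolding norm_vec_def L2_set_def by (simp add: sum_nonneg)
  have "norm v ^ (2*m) = (\<Sum>c\<in>UNIV. (v $ c) ^ 2) ^ m" unfolding n2[symmetric] by (simp add: power_mult)
  also have "\<dots> \<le> real CARD('d) ^ (m-1) * (\<Sum>c\<in>UNIV. ((v $ c) ^ 2) ^ m)"
    by (rule power_mean) (use assms in auto)
  finally show ?thesis by (simp add: power_mult)
qed

lemma one_plus_pow: "1 \<le> m \<Longrightarrow> (1 + 1 / real m) ^ m \<le> 3"
proof -
  assume "1 \<le> m"
  then have "(1 + 1 / real m) ^ m \<le> exp 1" by (intro exp_ge_one_plus_x_over_n_power_n) auto
  also have "\<dots> < 272/100" by (rule e_less_272)
  finally show ?thesis by simp
qed

lemma fact_bound: "1 \<le> m \<Longrightarrow> (3 * real m) ^ m \<le> 3 * fact (2*m)"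
proof (induct m rule: dec_induct)
  case base then show ?case by (simp add: numeral_eq_Suc)
next
  case (step m)
  show ?case
  proof (cases "m = 1")
    case True then show ?thesis by (simp add: numeral_eq_Suc)
  next
    case False
    then have m2: "m \<ge> 2" using step by simp
    have e: "(3 * real m) * (1 + 1 / real m) = 3 * real (Suc m)" using m2 by (simp add: field_simps)
    have "(3 * real (Suc m)) ^ Suc m = 3 * real (Suc m) * ((3 * real m) * (1 + 1 / real m)) ^ m"
      unfolding e by simp
    also have "\<dots> = 3 * real (Suc m) * ((3 * real m) ^ m * (1 + 1 / real m) ^ m)"
      by (simp add: power_mult_distrib)
    also have "\<dots> \<le> 3 * real (Suc m) * (3 * fact (2*m) * 3)"
      using step(3) one_plus_pow[OF step(1)]
      by (intro mult_left_mono mult_mono) auto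
    also have "\<dots> \<le> 3 * ((real (2*m) + 2) * (real (2*m) + 1) * fact (2*m))"
    proof -
      have mm: "real m * (real m * 4) \<ge> real m * 8" using m2 by (intro mult_left_mono) auto
      have "9 * real (Suc m) \<le> (real (2*m) + 2) * (real (2*m) + 1)" proof -
        have r2: "real m \<ge> 2" using m2 by simp
        show ?thesis apply (simp add: algebra_simps) using mm r2 by linarith
      qed
      then have "9 * real (Suc m) * fact (2*m) \<le> (real (2*m) + 2) * (real (2*m) + 1) * fact (2*m)"
        by (intro mult_right_mono) auto
      then show ?thesis by (simp add: mult_ac)
    qed
    also have "\<dots> = 3 * fact (2 * Suc m)"
      by (simp add: algebra_simps)
    finally show ?thesis .
  qed
qed



lemma powr_nat_eq: "0 \<le> (x::real) \<Longrightarrow> 0 < n \<Longrightarrow> x powr real n = x ^ n"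
  by (cases "x = 0") (auto simp: powr_realpow)

lemma Lnorm_comp:
  fixes f :: "'a \<Rightarrow> real ^ 'd" and c :: 'd
  assumes fin: "Lnorm M (real (2*m)) (vcond_exp M F f) < \<infinity>" and m: "1 \<le> m"
  shows "integrable M (\<lambda>x. \<bar>real_cond_exp M F (\<lambda>y. f y $ c) x\<bar> ^ (2*m))"
    "pn M (2*m) (real_cond_exp M F (\<lambda>y. f y $ c)) \<le> enn2real (Lnorm M (real (2*m)) (vcond_exp M F f))"
proof -
  let ?p = "2*m"
  define v where "v = vcond_exp M F f"
  define Y where "Y = real_cond_exp M F (\<lambda>y. f y $ c)"
  define I where "I = (\<integral>\<^sup>+ x. ennreal (norm (v x) powr real ?p) \<partial>M)"
  have Yv: "Y x = v x $ c" for x unfolding Y_def v_def vcond_exp_def by simp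
  have Iinf: "I \<noteq> \<infinity>" using fin unfolding Lnorm_def I_def v_def Let_def by (auto split: if_splits)
  have Lval: "Lnorm M (real ?p) v = ennreal (enn2real I powr (1 / real ?p))"
    using Iinf unfolding Lnorm_def I_def Let_def by simp
  have Ym[measurable]: "Y \<in> borel_measurable M" unfolding Y_def by simp
  have pw: "\<bar>Y x\<bar> ^ ?p \<le> norm (v x) powr real ?p" for x
  proof -
    have "\<bar>Y x\<bar> ^ ?p \<le> norm (v x) ^ ?p" unfolding Yv by (intro power_mono component_le_norm_cart) simp
    also have "\<dots> = norm (v x) powr real ?p" using m by (intro powr_nat_eq[symmetric]) auto
    finally show ?thesis .
  qed
  have J: "(\<integral>\<^sup>+ x. ennreal (\<bar>Y x\<bar> ^ ?p) \<partial>M) \<le> I"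
    unfolding I_def by (intro nn_integral_mono ennreal_leI pw)
  show int: "integrable M (\<lambda>x. \<bar>real_cond_exp M F (\<lambda>y. f y $ c) x\<bar> ^ (2*m))"
    unfolding Y_def[symmetric]
  proof (rule integrableI_bounded)
    show "(\<integral>\<^sup>+ x. ennreal (norm (\<bar>Y x\<bar> ^ ?p)) \<partial>M) < \<infinity>"
      using J Iinf by (simp add: less_top[symmetric]) (auto simp: top_unique)
  qed simp
  have "ennreal (\<integral>x. \<bar>Y x\<bar> ^ ?p \<partial>M) = (\<integral>\<^sup>+ x. ennreal (\<bar>Y x\<bar> ^ ?p) \<partial>M)"
    using int unfolding Y_def[symmetric] by (intro nn_integral_eq_integral[symmetric]) auto
  then have "(\<integral>x. \<bar>Y x\<bar> ^ ?p \<partial>M) \<le> enn2real I"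
  proof -
    assume E: "ennreal (\<integral>x. \<bar>Y x\<bar> ^ ?p \<partial>M) = (\<integral>\<^sup>+ x. ennreal (\<bar>Y x\<bar> ^ ?p) \<partial>M)"
    have nn: "0 \<le> (\<integral>x. \<bar>Y x\<bar> ^ ?p \<partial>M)" by simp
    have "(\<integral>x. \<bar>Y x\<bar> ^ ?p \<partial>M) = enn2real (\<integral>\<^sup>+ x. ennreal (\<bar>Y x\<bar> ^ ?p) \<partial>M)"
      unfolding E[symmetric] using nn by simp
    also have "\<dots> \<le> enn2real I" using J Iinf by (intro enn2real_mono) (auto simp: less_top)
    finally show ?thesis .
  qed
  then have "(\<integral>x. \<bar>Y x\<bar> ^ ?p \<partial>M) powr (1 / real ?p) \<le> enn2real I powr (1 / real ?p)"
    by (intro powr_mono2) auto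
  then show "pn M (2*m) (real_cond_exp M F (\<lambda>y. f y $ c)) \<le> enn2real (Lnorm M (real (2*m)) (vcond_exp M F f))"
    unfolding pn_def Y_def[symmetric] v_def[symmetric] Lval by simp
qed



theorem lemma3p4:
  fixes M :: "'a measure" and G :: "nat \<Rightarrow> 'a measure"
    and \<eta> :: "nat \<Rightarrow> 'a \<Rightarrow> real ^ 'd" and m n :: nat
  assumes "prob_space M"
    and "\<And>i. 1 \<le> i \<Longrightarrow> subalgebra M (G i)"
    and "\<And>i j. 1 \<le> i \<Longrightarrow> i \<le> j \<Longrightarrow> sets (G i) \<subseteq> sets (G j)"
    and "\<And>j. 1 \<le> j \<Longrightarrow> \<eta> j \<in> borel_measurable (G j)"
    and "\<And>j. 1 \<le> j \<Longrightarrow> integrable M (\<eta> j)"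
    and "1 \<le> m"
    and "A_const M G \<eta> m < \<infinity>"
    and "1 \<le> n"
  shows "(\<integral>\<^sup>+ x. ennreal (norm (\<Sum>j=1..n. \<eta> j x) ^ (2 * m)) \<partial>M)
           \<le> ennreal (3 * fact (2 * m) * real CARD('d) ^ m * real n ^ m) * A_const M G \<eta> m ^ (2 * m)"
proof -
  note prob = assms(1) and subalg = assms(2) and mono = assms(3) and etam = assms(4)
    and etai = assms(5) and m = assms(6) and Afin = assms(7)
  define Aenn where "Aenn = A_const M G \<eta> m"
  define A where "A = enn2real Aenn"
  have AA: "Aenn = ennreal A" unfolding A_def using Afin Aenn_def by simp
  have A0: "0 \<le> A" unfolding A_def by simp
  define L where "L i j = Lnorm M (real (2*m)) (vcond_exp M (G i) (\<eta> j))" for i j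
  have sumL: "(\<Sum>j=i..k. L i j) \<le> Aenn" if i: "1 \<le> i" for i k
  proof (cases "i \<le> k")
    case False then show ?thesis by simp
  next
    case True
    have "(\<Sum>j=i..k. L i j) = (\<Sum>j=0+i..(k-i)+i. L i j)" using True by simp
    also have "\<dots> = (\<Sum>j=0..k-i. L i (j+i))" by (rule sum.shift_bounds_cl_nat_ivl)
    also have "\<dots> = (\<Sum>j\<in>{0..k-i}. L i (i+j))" by (simp add: add.commute)
    also have "\<dots> \<le> (\<Sum>j. L i (i+j))" by (rule sum_le_suminf) auto
    also have "\<dots> \<le> Aenn" unfolding Aenn_def A_const_def L_def using i
      by (intro SUP_upper) auto
    finally show ?thesis .
  qed
  have Lfin: "L i j < \<infinity>" if "1 \<le> i" "i \<le> j" for i j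
  proof -
    have "L i j \<le> (\<Sum>j'=i..j. L i j')" by (rule member_le_sum) (use that in auto)
    also have "\<dots> \<le> Aenn" by (rule sumL[OF that(1)])
    also have "\<dots> < \<infinity>" using Afin Aenn_def by simp
    finally show ?thesis .
  qed
  have fin: "finite_measure M" using prob by (simp add: prob_space_def)
  have sfs: "sigma_finite_subalgebra M (G i)" if "1 \<le> i" for i
    by (rule finite_measure_subalgebra_is_sigma_finite)
       (simp add: finite_measure_subalgebra_def finite_measure_subalgebra_axioms_def fin subalg[OF that])
  define X where "X c j x = \<eta> j x $ c" for c j x
  have comp: "integrable M (\<lambda>x. (\<Sum>j=1..n. X c j x) ^ (2*m)) \<and>
      (\<integral>x. (\<Sum>j=1..n. X c j x) ^ (2*m) \<partial>M) \<le> (3 * real m * real n * A\<^sup>2) ^ m" for c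
  proof -
    have XmG: "X c j \<in> borel_measurable (G j)" if "1 \<le> j" for j
    proof -
      have "(\<lambda>v::real^'d. v $ c) \<in> borel_measurable borel"
        by (intro borel_measurable_continuous_onI continuous_on_component continuous_on_id)
      from measurable_compose[OF etam[OF that] this] show ?thesis unfolding X_def[abs_def] by simp
    qed
    have Xint: "integrable M (X c j)" if "1 \<le> j" for j
      unfolding X_def using integrable_bounded_linear[OF bounded_linear_vec_nth etai[OF that]] .
    have Yint: "integrable M (\<lambda>x. \<bar>real_cond_exp M (G i) (X c j) x\<bar> ^ (2*m))" 
      and Ypn: "pn M (2*m) (real_cond_exp M (G i) (X c j)) \<le> enn2real (L i j)"
      if "1 \<le> i" "i \<le> j" for i j
      using Lnorm_comp[of M m "G i" "\<eta> j" c] Lfin[OF that] m unfolding L_def X_def[abs_def] by auto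
    interpret S: setting M G "X c" m A
    proof (rule setting.intro)
      show "prob_space M" by (rule prob)
      show "subalgebra M (G i)" if "1 \<le> i" for i using subalg that .
      show "sets (G i) \<subseteq> sets (G j)" if "1 \<le> i" "i \<le> j" for i j using mono that .
      show "X c j \<in> borel_measurable (G j)" if "1 \<le> j" for j using XmG that .
      show "1 \<le> m" by (rule m)
      show "lp M (2 * m) (real_cond_exp M (G i) (X c j))" if "1 \<le> i" "i \<le> j" for i j
        unfolding lp_def using Yint[OF that] by simp
      show "lp M (2 * m) (X c j)" if j: "1 \<le> j" for j
      proof -
        have [measurable]: "X c j \<in> borel_measurable M" using measurable_from_subalg[OF subalg[OF j] XmG[OF j]] .
        have "AE x in M. real_cond_exp M (G j) (X c j) x = X c j x"
          by (rule sigma_finite_subalgebra.real_cond_exp_F_meas[OF sfs[OF j] Xint[OF j] XmG[OF j]])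
        then have "AE x in M. \<bar>real_cond_exp M (G j) (X c j) x\<bar> ^ (2*m) = \<bar>X c j x\<bar> ^ (2*m)"
          by eventually_elim simp
        then have "integrable M (\<lambda>x. \<bar>X c j x\<bar> ^ (2*m))"
          using Yint[OF j order_refl] by (subst integrable_cong_AE[symmetric]) auto
        then show ?thesis unfolding lp_def by simp
      qed
      show "(\<Sum>j=i..k. pn M (2 * m) (real_cond_exp M (G i) (X c j))) \<le> A" if i: "1 \<le> i" for i k
      proof -
        have "(\<Sum>j=i..k. pn M (2 * m) (real_cond_exp M (G i) (X c j))) \<le> (\<Sum>j=i..k. enn2real (L i j))"
          by (rule sum_mono) (use Ypn i in auto)
        also have "\<dots> = enn2real (\<Sum>j=i..k. L i j)"
          using Lfin i by (subst enn2real_sum) (auto simp: o_def)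
        also have "\<dots> \<le> enn2real Aenn" using sumL[OF i] Afin Aenn_def by (intro enn2real_mono) auto
        finally show ?thesis unfolding A_def .
      qed
    qed
    have "integrable M (\<lambda>x. S.S n x ^ (2*m))"
      using S.Slp[of n] unfolding lp_def by (simp add: power_even_abs)
    moreover have "(\<integral>x. S.S n x ^ (2*m) \<partial>M) \<le> (3 * real m * real n * A\<^sup>2) ^ m" by (rule S.one_dim)
    ultimately show ?thesis unfolding S.S_def by simp
  qed
  define d where "d = real CARD('d)"
  have pw: "norm (\<Sum>j=1..n. \<eta> j x) ^ (2*m) \<le> d ^ (m-1) * (\<Sum>c\<in>UNIV. (\<Sum>j=1..n. X c j x) ^ (2*m))" for x
    using norm_pow_le[OF m, of "\<Sum>j=1..n. \<eta> j x"] unfolding d_def X_def by simp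
  have intR: "integrable M (\<lambda>x. d ^ (m-1) * (\<Sum>c\<in>UNIV. (\<Sum>j=1..n. X c j x) ^ (2*m)))"
    using comp by (intro integrable_mult_right Bochner_Integration.integrable_sum) auto
  have E1: "(\<integral>\<^sup>+ x. ennreal (norm (\<Sum>j=1..n. \<eta> j x) ^ (2 * m)) \<partial>M)
      \<le> (\<integral>\<^sup>+ x. ennreal (d ^ (m-1) * (\<Sum>c\<in>UNIV. (\<Sum>j=1..n. X c j x) ^ (2*m))) \<partial>M)"
    by (intro nn_integral_mono ennreal_leI pw)
  have E2: "(\<integral>\<^sup>+ x. ennreal (d ^ (m-1) * (\<Sum>c\<in>UNIV. (\<Sum>j=1..n. X c j x) ^ (2*m))) \<partial>M)
      = ennreal (\<integral>x. d ^ (m-1) * (\<Sum>c\<in>UNIV. (\<Sum>j=1..n. X c j x) ^ (2*m)) \<partial>M)"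
  proof (intro nn_integral_eq_integral intR AE_I2)
    fix x
    have "0 \<le> (\<Sum>c\<in>UNIV. (\<Sum>j=1..n. X c j x) ^ (2*m))"
      by (intro sum_nonneg) (simp add: zero_le_even_power)
    then show "0 \<le> d ^ (m-1) * (\<Sum>c\<in>UNIV. (\<Sum>j=1..n. X c j x) ^ (2*m))" by (simp add: d_def)
  qed
  define K where "K = (3 * real m * real n * A\<^sup>2) ^ m"
  have "(\<integral>x. d ^ (m-1) * (\<Sum>c\<in>UNIV. (\<Sum>j=1..n. X c j x) ^ (2*m)) \<partial>M)
      = d ^ (m-1) * (\<Sum>c\<in>UNIV. (\<integral>x. (\<Sum>j=1..n. X c j x) ^ (2*m) \<partial>M))"
    using comp by (simp add: Bochner_Integration.integral_sum)
  also have "\<dots> \<le> d ^ (m-1) * (\<Sum>c\<in>(UNIV::'d set). K)"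
    unfolding K_def using comp by (intro mult_left_mono sum_mono) (auto simp: d_def)
  also have "(\<Sum>c\<in>(UNIV::'d set). K) = d * K" by (simp add: d_def)
  also have "d ^ (m-1) * (d * K) = d ^ m * K"
  proof -
    have "d ^ (m-1) * d = d ^ m" using m by (cases m) auto
    then show ?thesis by (simp add: mult.assoc[symmetric])
  qed
  also have "K = (3 * real m) ^ m * (real n ^ m * A ^ (2*m))"
    unfolding K_def by (simp add: power_mult_distrib power_mult)
  also have "d ^ m * ((3 * real m) ^ m * (real n ^ m * A ^ (2*m))) \<le> d ^ m * ((3 * fact (2*m)) * (real n ^ m * A ^ (2*m)))"
    using fact_bound[OF m] A0 by (intro mult_left_mono mult_right_mono) (auto simp: d_def)
  finally have R: "(\<integral>x. d ^ (m-1) * (\<Sum>c\<in>UNIV. (\<Sum>j=1..n. X c j x) ^ (2*m)) \<partial>M)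
      \<le> d ^ m * ((3 * fact (2*m)) * (real n ^ m * A ^ (2*m)))" .
  have F: "(\<integral>\<^sup>+ x. ennreal (norm (\<Sum>j=1..n. \<eta> j x) ^ (2 * m)) \<partial>M) \<le> ennreal (d ^ m * ((3 * fact (2*m)) * (real n ^ m * A ^ (2*m))))"
  proof -
    have a: "(\<integral>\<^sup>+ x. ennreal (norm (\<Sum>j=1..n. \<eta> j x) ^ (2 * m)) \<partial>M)
      \<le> ennreal (\<integral>x. d ^ (m-1) * (\<Sum>c\<in>UNIV. (\<Sum>j=1..n. X c j x) ^ (2*m)) \<partial>M)"
      using E1 unfolding E2 .
    have b: "ennreal (\<integral>x. d ^ (m-1) * (\<Sum>c\<in>UNIV. (\<Sum>j=1..n. X c j x) ^ (2*m)) \<partial>M)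
      \<le> ennreal (d ^ m * ((3 * fact (2*m)) * (real n ^ m * A ^ (2*m))))"
      by (rule ennreal_leI[OF R])
    show ?thesis by (rule order_trans[OF a b])
  qed
  have "ennreal (d ^ m * ((3 * fact (2*m)) * (real n ^ m * A ^ (2*m))))
      = ennreal (3 * fact (2 * m) * real CARD('d) ^ m * real n ^ m) * A_const M G \<eta> m ^ (2 * m)"
  proof -
    have "ennreal (3 * fact (2 * m) * real CARD('d) ^ m * real n ^ m) * ennreal A ^ (2 * m)
        = ennreal (3 * fact (2 * m) * real CARD('d) ^ m * real n ^ m) * ennreal (A ^ (2 * m))"
      using A0 by (simp add: ennreal_power)
    also have "\<dots> = ennreal (3 * fact (2 * m) * real CARD('d) ^ m * real n ^ m * A ^ (2 * m))"
      using A0 by (intro ennreal_mult[symmetric]) auto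
    finally show ?thesis unfolding Aenn_def[symmetric] AA d_def by (simp add: mult_ac)
  qed
  then show ?thesis using F by simp
qed


end
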